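(* Let $\theta>0$, $\alpha>0$ and $x\in(0,1)\setminus\mathbb{Q}$. Suppose there exist a constant $C>0$ and a real polynomial $P$ of degree less than $\alpha$ such that $|f_\theta(x+h)-P(h)|\le C|h|^\alpha$ for all $h$ in a neighborhood of $0$. Then $P$ is the zero polynomial.
   Context: For $\theta>0$, the generalized Thomae function $f_\theta:\mathbb{R}\to\mathbb{R}$ is defined by $f_\theta(0)=1$, $f_\theta(x)=q^{-\theta}$ if $x$ is rational written as $x=p/q$ with $p\in\mathbb{Z}$, $q\in\mathbb{N}$ and $\gcd(p,q)=1$, and $f_\theta(x)=0$ if $x$ is irrational. *)

theory Defs
  imports "HOL-Analysis.Analysis" "HOL-Computational_Algebra.Polynomial"
begin

text \<open>Generalized Thomae function: f(p/q) = q^(-theta) for p/q in lowest terms with q > 0,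
  f(0) = 1 (since 0 = 0/1), and f(x) = 0 for irrational x.\<close>
definition thomae :: "real \<Rightarrow> real \<Rightarrow> real" where
  "thomae \<theta> x =
     (if x \<in> \<rat> then
        (real_of_int (snd (quotient_of (THE r. of_rat r = x)))) powr (- \<theta>)
      else 0)"

end

theory Submission
  imports Defs "HOL-Real_Asymp.Real_Asymp"
begin

lemma thomae_irr: "y \<notin> \<rat> \<Longrightarrow> thomae t y = 0"
  by (simp add: thomae_def)

theorem mainTheorem2:
  fixes \<theta> \<alpha> x :: real and P :: "real poly"
  assumes "\<theta> > 0" and "\<alpha> > 0"
    and "x \<in> {0<..<1}" and "x \<notin> \<rat>"
    and "real (degree P) < \<alpha>"
    and "\<exists>C>0. \<exists>\<delta>>0. \<forall>h. \<bar>h\<bar> < \<delta> \<longrightarrow>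
           \<bar>thomae \<theta> (x + h) - poly P h\<bar> \<le> C * \<bar>h\<bar> powr \<alpha>"
  shows "P = 0"
proof (rule ccontr)
  assume P0: "P \<noteq> 0"
  obtain C \<delta> where C: "C > 0" "\<delta> > 0" and H: "\<And>h. \<bar>h\<bar> < \<delta> \<Longrightarrow>
           \<bar>thomae \<theta> (x + h) - poly P h\<bar> \<le> C * \<bar>h\<bar> powr \<alpha>"
    using assms(6) by blast
  define k where "k = order 0 P"
  obtain q where q: "P = [:-0,1:]^k * q" "\<not> [:-0,1:] dvd q"
    using order_decomp[OF P0] k_def by blast
  have q0: "poly q 0 \<noteq> 0" using q(2) by (simp add: dvd_iff_poly_eq_0)
  have kle: "real k < \<alpha>" using order_degree[OF P0, of 0] assms(5) k_def by linarith
  have x0: "x > 0" using assms(3) by auto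
  define h where "h = (\<lambda>n::nat. x / (real n + 2))"
  have hlim: "h \<longlonglongrightarrow> 0" unfolding h_def by real_asymp
  have hpos: "h n > 0" for n unfolding h_def using x0 by auto
  have hirr: "x + h n \<notin> \<rat>" for n
  proof
    assume "x + h n \<in> \<rat>"
    then have "(x + h n) * ((real n + 2) / (real n + 3)) \<in> \<rat>"
      by (intro Rats_mult) (auto intro: Rats_divide)
    moreover have "(x + h n) * ((real n + 2) / (real n + 3)) = x"
    proof -
      have a: "x + h n = x * (real n + 3) / (real n + 2)" unfolding h_def by (simp add: field_simps)
      have p: "real n + 2 > 0" "real n + 3 > 0" by auto
      have "x * (real n + 3) / (real n + 2) * ((real n + 2) / (real n + 3))
          = x * (((real n + 3) / (real n + 2)) * ((real n + 2) / (real n + 3)))" by simp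
      also have "((real n + 3) / (real n + 2)) * ((real n + 2) / (real n + 3)) = 1"
        using p by (simp add: divide_simps)
      finally show ?thesis unfolding a by simp
    qed
    ultimately show False using assms(4) by simp
  qed
  have ev: "eventually (\<lambda>n. h n < \<delta>) sequentially"
    using hlim C(2) by (simp add: order_tendsto_iff)
  have bound: "eventually (\<lambda>n. \<bar>poly q (h n)\<bar> \<le> C * h n powr (\<alpha> - real k)) sequentially"
    using ev
  proof eventually_elim
    case (elim n)
    have "\<bar>poly P (h n)\<bar> \<le> C * h n powr \<alpha>"
      using H[of "h n"] elim hpos[of n] thomae_irr[OF hirr[of n]] by simp
    moreover have "poly P (h n) = h n ^ k * poly q (h n)" using q(1) by simp
    moreover have "h n powr \<alpha> = h n ^ k * h n powr (\<alpha> - real k)"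
      using hpos[of n] by (simp add: powr_diff powr_realpow)
    ultimately have "h n ^ k * \<bar>poly q (h n)\<bar> \<le> h n ^ k * (C * h n powr (\<alpha> - real k))"
      using hpos[of n] by (simp add: abs_mult)
    then show ?case using hpos[of n] by (simp add: mult_le_cancel_left_pos)
  qed
  have l1: "(\<lambda>n. \<bar>poly q (h n)\<bar>) \<longlonglongrightarrow> \<bar>poly q 0\<bar>"
    by (intro tendsto_intros isCont_tendsto_compose[OF poly_isCont hlim])
  have l2: "(\<lambda>n. C * h n powr (\<alpha> - real k)) \<longlonglongrightarrow> C * 0"
    using kle x0 unfolding h_def by real_asymp
  have "\<bar>poly q 0\<bar> \<le> C * 0"
    using tendsto_le[OF _ l2 l1 bound] by simp
  then show False using q0 by simp
qed

end
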